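(* Let $\mathbf{H}\in\mathbb{R}^{m\times n}$ have full column rank (rows indexed by meters $1,\dots,m$), and let $\mathcal{S}_1,\mathcal{S}_2$ be a partition of a critical set $\mathcal{S}_1\cup\mathcal{S}_2$ of meters. Let $\bar{\mathbf{H}}$ be $\mathbf{H}$ with the rows indexed by $\mathcal{S}_1\cup\mathcal{S}_2$ deleted (so $\bar{\mathbf{H}}$ has rank $n-1$), and let $\Delta\mathbf{x}$ be a unit vector spanning $\mathcal{N}(\bar{\mathbf{H}})$. Let $\mathbf{H}_1$ (resp. $\mathbf{H}_2$) be the $m\times n$ matrix obtained from $\mathbf{H}$ by replacing the rows indexed by $\mathcal{S}_2$ (resp. $\mathcal{S}_1$) with zero rows. Suppose that when the noiseless iterative state estimation is run on the input vector $\mathbf{H}_1\Delta\mathbf{x}$, there is a unique $\mathbf{y}\in\mathbb{R}^n$ such that the final state estimate equals $\mathbf{y}$ for every possible way of breaking ties in bad data identification. Then for every true state $\mathbf{x}\in\mathbb{R}^n$ and every $\eta\in\mathbb{R}$: (1) If the (noisy) iterative state estimation is run on $\bar{\mathbf{z}}=\mathbf{H}\mathbf{x}+\mathbf{e}+\eta\,\mathbf{H}_1\Delta\mathbf{x}$, then $$\lim_{\sigma^2\to 0}\Pr\big(\bar{\mathbf{z}}^{(N)}=\mathbf{H}^{(N)}(\mathbf{x}+\eta\,\mathbf{y})+\mathbf{e}^{(N)}\big)=1.$$ (2) If the (noisy) iterative state estimation is run on $\bar{\mathbf{z}}=\mathbf{H}\mathbf{x}+\mathbf{e}+\eta\,\mathbf{H}_2\Delta\mathbf{x}$,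 then $$\lim_{\sigma^2\to 0}\Pr\big(\bar{\mathbf{z}}^{(N)}=\mathbf{H}^{(N)}(\mathbf{x}+\eta(\Delta\mathbf{x}-\mathbf{y}))+\mathbf{e}^{(N)}\big)=1.$$ Here $N$ is the (random) total number of iterations, and $\bar{\mathbf{z}}^{(N)},\mathbf{H}^{(N)},\mathbf{e}^{(N)}$ are obtained from $\bar{\mathbf{z}},\mathbf{H},\mathbf{e}$ by deleting the rows of all meters removed during the first $N-1$ iterations.
   Context: Measurement model (DC model): $\mathbf{z}=\mathbf{H}\mathbf{x}+\mathbf{e}$ with $\mathbf{H}\in\mathbb{R}^{m\times n}$ of full column rank ("the network is observable"), $\mathbf{e}\sim\mathcal{N}(\mathbf{0},\boldsymbol{\Sigma})$, $\boldsymbol{\Sigma}=\sigma^2\bar{\boldsymbol{\Sigma}}$ with $\bar{\boldsymbol{\Sigma}}$ diagonal with positive entries summing to $1$, and $\sigma^2>0$ a scaling factor. Removing a set of meters means deleting the corresponding rows; a set of meters is observable-preserving if the remaining matrix has full column rank. A set $\mathcal{S}_0$ of meters is a critical set if removing all meters of $\mathcal{S}_0$ makes the remaining matrix rank deficient while removing any strict subset of $\mathcal{S}_0$ does not. Iterative state estimation on an input vector $\mathbf{z}$: set $\mathbf{z}^{(1)}=\mathbf{z}$, $\mathbf{H}^{(1)}=\mathbf{H}$, $\boldsymbol{\Sigma}^{(1)}=\boldsymbol{\Sigma}$. At iteration $k$: compute $\hat{\mathbf{x}}^{(k)}=((\mathbf{H}^{(k)})^T(\boldsymbol{\Sigma}^{(k)})^{-1}\mathbf{H}^{(k)})^{-1}(\mathbf{H}^{(k)})^T(\boldsymbol{\Sigma}^{(k)})^{-1}\mathbf{z}^{(k)}$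 and residue $\mathbf{r}^{(k)}=\mathbf{z}^{(k)}-\mathbf{H}^{(k)}\hat{\mathbf{x}}^{(k)}=\mathbf{W}^{(k)}\mathbf{z}^{(k)}$, where $\mathbf{W}^{(k)}=\mathbf{I}-\mathbf{H}^{(k)}((\mathbf{H}^{(k)})^T(\boldsymbol{\Sigma}^{(k)})^{-1}\mathbf{H}^{(k)})^{-1}(\mathbf{H}^{(k)})^T(\boldsymbol{\Sigma}^{(k)})^{-1}$. Bad data detection: if $(\mathbf{r}^{(k)})^T(\boldsymbol{\Sigma}^{(k)})^{-1}\mathbf{r}^{(k)}\le\tau^{(k)}$ the data are declared good, the algorithm stops with $N=k$ and outputs $\hat{\mathbf{x}}^{(k)}$; here $\tau^{(k)}>0$ is a fixed threshold not depending on $\sigma^2$. Otherwise bad data identification: form the normalized residue $\tilde{\mathbf{r}}^{(k)}=\boldsymbol{\Omega}^{(k)}\mathbf{r}^{(k)}$ with $\boldsymbol{\Omega}^{(k)}$ diagonal, $\boldsymbol{\Omega}^{(k)}_{ii}=0$ if the single meter $\{i\}$ is a critical set for $\mathbf{H}^{(k)}$, and $\boldsymbol{\Omega}^{(k)}_{ii}=1/\sqrt{(\mathbf{W}^{(k)}\boldsymbol{\Sigma}^{(k)})_{ii}}$ otherwise; remove the meter with the largest $|\tilde r^{(k)}_i|$ (ties broken arbitrarily), i.e. delete its row from $\mathbf{z}^{(k)}$, $\mathbf{H}^{(k)}$ and its row and column from $\boldsymbol{\Sigma}^{(k)}$, to get $\mathbf{z}^{(k+1)},\mathbf{H}^{(k+1)},\boldsymbol{\Sigma}^{(k+1)}$,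 and continue. The noiseless iterative state estimation is the same procedure with $\boldsymbol{\Sigma}$ replaced by $\bar{\boldsymbol{\Sigma}}$ and with detection declaring data good if and only if $(\mathbf{r}^{(k)})^T(\bar{\boldsymbol{\Sigma}}^{(k)})^{-1}\mathbf{r}^{(k)}=0$; its final state estimate is $\hat{\mathbf{x}}^{(N)}$. *)

theory Defs
  imports "HOL-Probability.Probability"
begin

text \<open>Measurement matrix H is represented by its rows: H :: 'm \<Rightarrow> real^'n,
  row i of H is H i (meters indexed by the finite type 'm, states by 'n). A set R of meters denotes
  the remaining rows; H restricted to R is the current matrix H^(k).
  Diagonal covariance entries are given by s :: 'm \<Rightarrow> real.\<close>

definition row_rank :: "('m \<Rightarrow> real^'n) \<Rightarrow> 'm set \<Rightarrow> nat" where
  "row_rank H R = dim (H ` R)"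

definition full_col_rank :: "('m \<Rightarrow> real^'n::finite) \<Rightarrow> 'm set \<Rightarrow> bool" where
  "full_col_rank H R \<longleftrightarrow> row_rank H R = CARD('n)"

definition critical_set :: "('m \<Rightarrow> real^'n::finite) \<Rightarrow> 'm set \<Rightarrow> 'm set \<Rightarrow> bool" where
  "critical_set H R S0 \<longleftrightarrow> S0 \<subseteq> R \<and> \<not> full_col_rank H (R - S0)
      \<and> (\<forall>T. T \<subset> S0 \<longrightarrow> full_col_rank H (R - T))"

definition gram :: "('m \<Rightarrow> real^'n) \<Rightarrow> ('m \<Rightarrow> real) \<Rightarrow> 'm set \<Rightarrow> real^'n^'n" where
  "gram H s R = (\<Sum>i\<in>R. (1 / s i) *\<^sub>R (\<chi> a b. H i $ a * H i $ b))"

definition est :: "('m \<Rightarrow> real^'n) \<Rightarrow> ('m \<Rightarrow> real) \<Rightarrow> 'm set \<Rightarrow> ('m \<Rightarrow> real) \<Rightarrow> real^'n" where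
  "est H s R z = matrix_inv (gram H s R) *v (\<Sum>i\<in>R. (z i / s i) *\<^sub>R H i)"

definition resid :: "('m \<Rightarrow> real^'n) \<Rightarrow> ('m \<Rightarrow> real) \<Rightarrow> 'm set \<Rightarrow> ('m \<Rightarrow> real) \<Rightarrow> 'm \<Rightarrow> real" where
  "resid H s R z i = z i - H i \<bullet> est H s R z"

definition Jstat :: "('m \<Rightarrow> real^'n) \<Rightarrow> ('m \<Rightarrow> real) \<Rightarrow> 'm set \<Rightarrow> ('m \<Rightarrow> real) \<Rightarrow> real" where
  "Jstat H s R z = (\<Sum>i\<in>R. (resid H s R z i)\<^sup>2 / s i)"

definition WSigma_diag :: "('m \<Rightarrow> real^'n) \<Rightarrow> ('m \<Rightarrow> real) \<Rightarrow> 'm set \<Rightarrow> 'm \<Rightarrow> real" where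
  "WSigma_diag H s R i = s i - H i \<bullet> (matrix_inv (gram H s R) *v H i)"

definition omega :: "('m \<Rightarrow> real^'n::finite) \<Rightarrow> ('m \<Rightarrow> real) \<Rightarrow> 'm set \<Rightarrow> 'm \<Rightarrow> real" where
  "omega H s R i = (if critical_set H R {i} then 0 else 1 / sqrt (WSigma_diag H s R i))"

definition nresid :: "('m \<Rightarrow> real^'n::finite) \<Rightarrow> ('m \<Rightarrow> real) \<Rightarrow> 'm set \<Rightarrow> ('m \<Rightarrow> real) \<Rightarrow> 'm \<Rightarrow> real" where
  "nresid H s R z i = omega H s R i * resid H s R z i"

text \<open>Iterative state estimation as a (nondeterministic, for tie breaking) relation:
  ise_run H s good z k R N Rf : starting at iteration k with remaining meters R,
  some run stops at iteration N with remaining meters Rf.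
  good k v decides whether data are declared good at iteration k given
  v = r^T Sigma^{-1} r.\<close>
inductive ise_run :: "('m \<Rightarrow> real^'n::finite) \<Rightarrow> ('m \<Rightarrow> real) \<Rightarrow> (nat \<Rightarrow> real \<Rightarrow> bool)
    \<Rightarrow> ('m \<Rightarrow> real) \<Rightarrow> nat \<Rightarrow> 'm set \<Rightarrow> nat \<Rightarrow> 'm set \<Rightarrow> bool"
  for H s good z where
  stop: "good k (Jstat H s R z) \<Longrightarrow> ise_run H s good z k R k R"
| remove: "\<not> good k (Jstat H s R z) \<Longrightarrow> i \<in> R
     \<Longrightarrow> (\<forall>j\<in>R. \<bar>nresid H s R z j\<bar> \<le> \<bar>nresid H s R z i\<bar>)
     \<Longrightarrow> ise_run H s good z (Suc k) (R - {i}) N Rf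
     \<Longrightarrow> ise_run H s good z k R N Rf"

text \<open>Noisy run (Sigma = sigma2 * Sigmabar, thresholds tau) started from all meters\<close>
definition noisy_run :: "('m \<Rightarrow> real^'n::finite) \<Rightarrow> ('m \<Rightarrow> real) \<Rightarrow> real \<Rightarrow> (nat \<Rightarrow> real)
    \<Rightarrow> ('m \<Rightarrow> real) \<Rightarrow> nat \<Rightarrow> 'm set \<Rightarrow> bool" where
  "noisy_run H w sigma2 tau z N Rf \<longleftrightarrow>
     ise_run H (\<lambda>i. sigma2 * w i) (\<lambda>k v. v \<le> tau k) z 1 UNIV N Rf"

definition noiseless_run :: "('m \<Rightarrow> real^'n::finite) \<Rightarrow> ('m \<Rightarrow> real)
    \<Rightarrow> ('m \<Rightarrow> real) \<Rightarrow> nat \<Rightarrow> 'm set \<Rightarrow> bool" where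
  "noiseless_run H w z N Rf \<longleftrightarrow> ise_run H w (\<lambda>k v. v = 0) z 1 UNIV N Rf"

definition noise_measure :: "('m \<Rightarrow> real) \<Rightarrow> real \<Rightarrow> ('m \<Rightarrow> real) measure" where
  "noise_measure w sigma2 = PiM UNIV (\<lambda>i. density lborel (normal_density 0 (sqrt (sigma2 * w i))))"

definition zero_rows :: "('m \<Rightarrow> real^'n) \<Rightarrow> 'm set \<Rightarrow> 'm \<Rightarrow> real^'n" where
  "zero_rows H S i = (if i \<in> S then 0 else H i)"

end

theory Submission
  imports Defs
begin


lemma span_full:
  fixes H :: "'m \<Rightarrow> real^'n::finite"
  assumes "full_col_rank H R" shows "span (H ` R) = UNIV"
  using assms unfolding full_col_rank_def row_rank_def
  by (metis dim_eq_full DIM_cart DIM_real mult_1_right)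

lemma full_rank_nz:
  fixes H :: "'m \<Rightarrow> real^'n::finite"
  assumes "full_col_rank H R" "v \<noteq> 0" shows "\<exists>j\<in>R. H j \<bullet> v \<noteq> 0"
proof (rule ccontr)
  assume "\<not> ?thesis"
  then have "\<forall>y\<in>H ` R. orthogonal v y" by (auto simp: orthogonal_def inner_commute)
  then have "orthogonal v v" using span_full[OF assms(1)]
    by (metis UNIV_I orthogonal_to_span)
  then show False using assms(2) by (simp add: orthogonal_def)
qed

lemma not_full_ex:
  fixes H :: "'m \<Rightarrow> real^'n::finite"
  assumes "\<not> full_col_rank H R" shows "\<exists>v. v \<noteq> 0 \<and> (\<forall>j\<in>R. H j \<bullet> v = 0)"
proof -
  have "dim (H ` R) < DIM(real^'n)"
    using assms dim_subset_UNIV_cart[of "H ` R"] unfolding full_col_rank_def row_rank_def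
    by (simp add: DIM_cart)
  from orthogonal_to_subspace_exists[OF this] obtain v where "v \<noteq> 0" "\<And>y. y \<in> span (H ` R) \<Longrightarrow> orthogonal v y"
    by metis
  then show ?thesis
    by (metis image_eqI inner_commute orthogonal_def span_base)
qed

lemma gram_mult:
  "gram H s R *v v = (\<Sum>i\<in>R. ((H i \<bullet> v) / s i) *\<^sub>R H i)"
  unfolding gram_def
  by (simp add: vec_eq_iff matrix_vector_mult_def sum_distrib_left sum_distrib_right
      inner_vec_def sum_component algebra_simps)
       (simp add: sum_divide_distrib, subst sum.swap, simp)

lemma gram_quad:
  "v \<bullet> (gram H s R *v v) = (\<Sum>i\<in>R. (H i \<bullet> v)^2 / s i)"
  unfolding gram_mult inner_sum_right
  by (auto intro!: sum.cong simp: power2_eq_square inner_commute)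

lemma gram_inj:
  fixes H :: "'m::finite \<Rightarrow> real^'n::finite"
  assumes s: "\<forall>i. s i > 0" and f: "full_col_rank H R" and g: "gram H s R *v v = 0"
  shows "v = 0"
proof (rule ccontr)
  assume v: "v \<noteq> 0"
  have "(\<Sum>i\<in>R. (H i \<bullet> v)^2 / s i) = 0" using gram_quad[of v H s R] g by simp
  then have "\<forall>i\<in>R. (H i \<bullet> v)^2 / s i = 0"
    by (subst (asm) sum_nonneg_eq_0_iff) (auto intro: divide_nonneg_pos s[rule_format] less_imp_le)
  then have "\<forall>i\<in>R. H i \<bullet> v = 0" using s by (metis divide_eq_0_iff less_irrefl power_eq_0_iff)
  then show False using full_rank_nz[OF f v] by auto
qed

lemma invertible_of_inj:
  fixes A :: "real^'n::finite^'n"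
  assumes "\<And>x. A *v x = 0 \<Longrightarrow> x = 0" shows "invertible A"
proof -
  obtain B where "B ** A = mat 1" using matrix_left_invertible_ker[of A] assms by blast
  then have "A ** B = mat 1" using matrix_left_right_inverse by blast
  with \<open>B ** A = mat 1\<close> show ?thesis unfolding invertible_def by blast
qed

lemma matrix_inv_props:
  assumes "invertible A"
  shows "A ** matrix_inv A = mat 1" "matrix_inv A ** A = mat 1"
  using someI_ex[OF assms[unfolded invertible_def]] unfolding matrix_inv_def by auto

lemma matrix_inv_unique:
  fixes A :: "real^'n::finite^'n"
  assumes "A ** B = mat 1" "B ** A = mat 1" shows "matrix_inv A = B"
proof -
  have i: "invertible A" using assms unfolding invertible_def by blast
  have "matrix_inv A = matrix_inv A ** (A ** B)" using assms by (simp add: matrix_mul_rid)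
  also have "\<dots> = (matrix_inv A ** A) ** B" by (simp add: matrix_mul_assoc)
  also have "\<dots> = B" using matrix_inv_props[OF i] by (simp add: matrix_mul_lid)
  finally show ?thesis .
qed

lemma gram_invertible:
  fixes H :: "'m::finite \<Rightarrow> real^'n::finite"
  assumes s: "\<forall>i. s i > 0" and f: "full_col_rank H R"
  shows "invertible (gram H s R)"
  using gram_inj[OF s f] by (intro invertible_of_inj) blast

lemma inv_mult_cancel:
  fixes A :: "real^'n::finite^'n"
  assumes "invertible A"
  shows "matrix_inv A *v (A *v x) = x" "A *v (matrix_inv A *v x) = x"
  using matrix_inv_props[OF assms]
  by (simp_all add: matrix_vector_mul_assoc)

lemma est_Hx:
  fixes H :: "'m::finite \<Rightarrow> real^'n::finite"
  assumes s: "\<forall>i. s i > 0" and f: "full_col_rank H R"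
  shows "est H s R (\<lambda>i. H i \<bullet> x) = x"
  unfolding est_def gram_mult[symmetric]
  using inv_mult_cancel(1)[OF gram_invertible[OF s f]] by simp

lemma resid_Hx:
  fixes H :: "'m::finite \<Rightarrow> real^'n::finite"
  assumes s: "\<forall>i. s i > 0" and f: "full_col_rank H R"
  shows "resid H s R (\<lambda>i. H i \<bullet> x) j = 0"
  unfolding resid_def est_Hx[OF s f] by simp

definition ccoef :: "('m \<Rightarrow> real^'n::finite) \<Rightarrow> ('m \<Rightarrow> real) \<Rightarrow> 'm set \<Rightarrow> 'm \<Rightarrow> real^'n" where
  "ccoef H s R i = matrix_inv (gram H s R) *v ((1 / s i) *\<^sub>R H i)"

lemma est_lin:
  "est H s R z = (\<Sum>i\<in>R. z i *\<^sub>R ccoef H s R i)"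
proof -
  have "est H s R z = matrix_inv (gram H s R) *v (\<Sum>i\<in>R. z i *\<^sub>R ((1 / s i) *\<^sub>R H i))"
    unfolding est_def by (simp add: divide_inverse)
  also have "\<dots> = (\<Sum>i\<in>R. z i *\<^sub>R ccoef H s R i)"
    unfolding ccoef_def
    by (simp add: linear_sum[OF matrix_vector_mul_linear] o_def matrix_vector_mult_scaleR)
  finally show ?thesis .
qed

lemma resid_lin:
  "resid H s R z j = z j - (\<Sum>i\<in>R. z i * (H j \<bullet> ccoef H s R i))"
  unfolding resid_def est_lin by (simp add: inner_sum_right mult.commute)

lemma normal_eq:
  fixes H :: "'m::finite \<Rightarrow> real^'n::finite"
  assumes s: "\<forall>i. s i > 0" and f: "full_col_rank H R"
  shows "(\<Sum>i\<in>R. (resid H s R z i / s i) *\<^sub>R H i) = 0"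
proof -
  let ?b = "\<Sum>i\<in>R. (z i / s i) *\<^sub>R H i"
  let ?u = "est H s R z"
  have u: "?u = matrix_inv (gram H s R) *v ?b" unfolding est_def ..
  have "(\<Sum>i\<in>R. (resid H s R z i / s i) *\<^sub>R H i)
      = ?b - (\<Sum>i\<in>R. ((H i \<bullet> ?u) / s i) *\<^sub>R H i)"
    unfolding resid_def by (simp add: diff_divide_distrib scaleR_diff_left sum_subtractf)
  also have "\<dots> = ?b - gram H s R *v ?u" unfolding gram_mult ..
  also have "\<dots> = 0" unfolding u inv_mult_cancel(2)[OF gram_invertible[OF s f]] by simp
  finally show ?thesis .
qed

lemma crit_iff:
  fixes H :: "'m::finite \<Rightarrow> real^'n::finite"
  assumes f: "full_col_rank H R" and i: "i \<in> R"
  shows "critical_set H R {i} \<longleftrightarrow> \<not> full_col_rank H (R - {i})"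
proof -
  have "T \<subset> {i} \<longleftrightarrow> T = {}" for T :: "'m set" by auto
  then show ?thesis unfolding critical_set_def using f i by auto
qed

lemma crit_resid:
  fixes H :: "'m::finite \<Rightarrow> real^'n::finite"
  assumes s: "\<forall>i. s i > 0" and f: "full_col_rank H R" and i: "i \<in> R"
    and c: "critical_set H R {i}"
  shows "resid H s R z i = 0"
proof -
  obtain v where v: "v \<noteq> 0" "\<forall>j\<in>R - {i}. H j \<bullet> v = 0"
    using not_full_ex crit_iff[OF f i] c by blast
  have hi: "H i \<bullet> v \<noteq> 0" using full_rank_nz[OF f v(1)] v(2) by auto
  have "0 = (\<Sum>j\<in>R. (resid H s R z j / s j) *\<^sub>R H j) \<bullet> v"
    using normal_eq[OF s f] by simp
  also have "\<dots> = (\<Sum>j\<in>R. (resid H s R z j / s j) * (H j \<bullet> v))"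
    by (simp add: inner_sum_left)
  also have "\<dots> = (resid H s R z i / s i) * (H i \<bullet> v)"
    by (subst sum.remove[OF _ i]) (auto simp: v(2))
  finally show ?thesis using hi s by (metis divide_eq_0_iff less_irrefl mult_eq_0_iff)
qed

lemma gram_remove:
  fixes H :: "'m::finite \<Rightarrow> real^'n::finite"
  assumes i: "i \<in> R"
  shows "gram H s R *v v = gram H s (R - {i}) *v v + ((H i \<bullet> v) / s i) *\<^sub>R H i"
  unfolding gram_mult by (subst sum.remove[OF _ i]) auto

lemma noncrit_WS:
  fixes H :: "'m::finite \<Rightarrow> real^'n::finite"
  assumes s: "\<forall>i. s i > 0" and f: "full_col_rank H R" and i: "i \<in> R"
    and c: "\<not> critical_set H R {i}"
  shows "WSigma_diag H s R i \<noteq> 0"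
proof
  assume W: "WSigma_diag H s R i = 0"
  let ?g = "matrix_inv (gram H s R) *v H i"
  have f': "full_col_rank H (R - {i})" using crit_iff[OF f i] c by simp
  have si: "H i \<bullet> ?g = s i" using W unfolding WSigma_diag_def by simp
  have "gram H s R *v ?g = H i" using inv_mult_cancel(2)[OF gram_invertible[OF s f]] by simp
  then have "gram H s (R - {i}) *v ?g = 0"
    using gram_remove[OF i, of H s ?g] si s by (simp add: less_imp_neq[symmetric])
  then have "?g = 0" using gram_inj[OF s f'] by blast
  then have "s i = 0" using si by simp
  then show False using s by (metis less_irrefl)
qed

lemma Jstat_zero:
  fixes H :: "'m::finite \<Rightarrow> real^'n::finite"
  assumes s: "\<forall>i. s i > 0"
  shows "Jstat H s R z = 0 \<longleftrightarrow> (\<forall>j\<in>R. resid H s R z j = 0)"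
proof -
  have "Jstat H s R z = 0 \<longleftrightarrow> (\<forall>j\<in>R. (resid H s R z j)^2 / s j = 0)"
    unfolding Jstat_def
    by (subst sum_nonneg_eq_0_iff) (auto intro: divide_nonneg_pos s[rule_format] less_imp_le)
  then show ?thesis using s by (auto simp: less_imp_neq[symmetric])
qed




lemma normal_tail:
  fixes \<sigma> \<delta> :: real
  assumes s: "\<sigma> > 0" and d: "\<delta> > 0"
  shows "measure (density lborel (normal_density 0 \<sigma>)) {x. \<not> \<bar>x\<bar> < \<delta>} \<le> \<sigma>^2 / \<delta>^2"
proof -
  let ?N = "density lborel (normal_density 0 \<sigma>)"
  interpret N: prob_space ?N by (rule prob_space_normal_density[OF s])
  have A: "{x::real. \<not> \<bar>x\<bar> < \<delta>} \<in> sets borel" by measurable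
  have int: "integrable lborel (\<lambda>x. normal_density 0 \<sigma> x * x^2)"
    using integrable_normal_moment[OF s, of 0 2] by simp
  have I2: "(\<integral>x. normal_density 0 \<sigma> x * x^2 \<partial>lborel) = \<sigma>^2"
    using integral_normal_moment_even[OF s, of 0 1] by (simp add: power2_eq_square)
  have "emeasure ?N {x. \<not> \<bar>x\<bar> < \<delta>} = (\<integral>\<^sup>+x. ennreal (normal_density 0 \<sigma> x) * indicator {x. \<not> \<bar>x\<bar> < \<delta>} x \<partial>lborel)"
    using A by (simp add: emeasure_density nn_integral_set_ennreal)
  also have "\<dots> \<le> (\<integral>\<^sup>+x. ennreal (normal_density 0 \<sigma> x * x^2 / \<delta>^2) \<partial>lborel)"
  proof (rule nn_integral_mono)
    fix x :: real
    show "ennreal (normal_density 0 \<sigma> x) * indicator {x. \<not> \<bar>x\<bar> < \<delta>} x \<le> ennreal (normal_density 0 \<sigma> x * x^2 / \<delta>^2)"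
    proof (cases "\<bar>x\<bar> < \<delta>")
      case True then show ?thesis by simp
    next
      case False
      then have "\<delta>^2 \<le> x^2" using d by (metis abs_le_square_iff linorder_not_less abs_of_pos)
      then have "1 \<le> x^2 / \<delta>^2" using d by simp
      then have "normal_density 0 \<sigma> x \<le> normal_density 0 \<sigma> x * (x^2 / \<delta>^2)"
        using normal_density_nonneg[of 0 \<sigma> x] by (metis mult_le_cancel_left1 not_le order.trans mult_cancel_left1 order_refl)
      with False show ?thesis by (simp add: ennreal_leI)
    qed
  qed
  also have "\<dots> = ennreal (\<integral>x. normal_density 0 \<sigma> x * x^2 / \<delta>^2 \<partial>lborel)"
    by (rule nn_integral_eq_integral) (use int in auto)
  also have "\<dots> = ennreal (\<sigma>^2 / \<delta>^2)" using I2 by simp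
  finally show ?thesis using N.emeasure_eq_measure by (simp add: ennreal_le_iff[symmetric] del: ennreal_le_iff)
qed

lemma noise_prob_space:
  assumes w: "\<forall>i. w i > 0" and s: "\<sigma> > 0"
  shows "prob_space (noise_measure w \<sigma>)"
  unfolding noise_measure_def
  by (rule prob_space_PiM, rule prob_space_normal_density) (use w s in simp)

lemma box_measure:
  fixes w :: "'m::finite \<Rightarrow> real"
  assumes w: "\<forall>i. w i > 0" and s: "\<sigma> > 0"
  shows "measure (noise_measure w \<sigma>) {e. \<forall>i. \<bar>e i\<bar> < \<delta>}
      = (\<Prod>i\<in>UNIV. measure (density lborel (normal_density 0 (sqrt (\<sigma> * w i)))) {x. \<bar>x\<bar> < \<delta>})"
proof -
  let ?M = "\<lambda>i. density lborel (normal_density 0 (sqrt (\<sigma> * w i)))"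
  have P: "prob_space (?M i)" for i by (rule prob_space_normal_density) (use w s in simp)
  have A: "{x::real. \<bar>x\<bar> < \<delta>} \<in> sets (?M i)" for i by simp
  have eq: "prod_emb UNIV ?M UNIV (Pi\<^sub>E UNIV (\<lambda>i. {x. \<bar>x\<bar> < \<delta>})) = {e. \<forall>i. \<bar>e i\<bar> < \<delta>}"
    by (auto simp: prod_emb_def space_PiM PiE_iff)
  have "emeasure (noise_measure w \<sigma>) {e. \<forall>i. \<bar>e i\<bar> < \<delta>}
      = (\<Prod>i\<in>UNIV. emeasure (?M i) {x. \<bar>x\<bar> < \<delta>})"
    unfolding noise_measure_def eq[symmetric]
    by (rule emeasure_PiM_emb) (use P A in auto)
  also have "\<dots> = (\<Prod>i\<in>UNIV. ennreal (measure (?M i) {x. \<bar>x\<bar> < \<delta>}))"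
    by (intro prod.cong refl finite_measure.emeasure_eq_measure prob_space.axioms(1)[OF P])
  also have "\<dots> = ennreal (\<Prod>i\<in>UNIV. measure (?M i) {x. \<bar>x\<bar> < \<delta>})"
    by (simp add: prod_ennreal)
  finally show ?thesis
    using finite_measure.emeasure_eq_measure[OF prob_space.axioms(1)[OF noise_prob_space[OF w s]]]
    by (simp add: prod_nonneg)
qed

lemma factor_bounds:
  assumes wi: "wi > 0" and s: "\<sigma> > 0" and d: "\<delta> > 0"
  shows "1 - \<sigma> * wi / \<delta>^2 \<le> measure (density lborel (normal_density 0 (sqrt (\<sigma> * wi)))) {x. \<bar>x\<bar> < \<delta>}"
    "measure (density lborel (normal_density 0 (sqrt (\<sigma> * wi)))) {x. \<bar>x\<bar> < \<delta>} \<le> 1"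
proof -
  let ?N = "density lborel (normal_density 0 (sqrt (\<sigma> * wi)))"
  have sp: "sqrt (\<sigma> * wi) > 0" using wi s by simp
  interpret N: prob_space ?N by (rule prob_space_normal_density[OF sp])
  have A: "{x::real. \<bar>x\<bar> < \<delta>} \<in> sets ?N" by simp
  have "measure ?N {x. \<not> \<bar>x\<bar> < \<delta>} = 1 - measure ?N {x. \<bar>x\<bar> < \<delta>}"
    using N.prob_compl[OF A] by (simp add: Compl_eq_Diff_UNIV[symmetric] Collect_neg_eq)
  moreover have "measure ?N {x. \<not> \<bar>x\<bar> < \<delta>} \<le> \<sigma> * wi / \<delta>^2"
    using normal_tail[OF sp d] wi s by simp
  ultimately show "1 - \<sigma> * wi / \<delta>^2 \<le> measure ?N {x. \<bar>x\<bar> < \<delta>}" by simp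
  show "measure ?N {x. \<bar>x\<bar> < \<delta>} \<le> 1" by (rule N.prob_le_1)
qed

lemma box_limit:
  fixes w :: "'m::finite \<Rightarrow> real"
  assumes w: "\<forall>i. w i > 0" and d: "\<delta> > 0"
  shows "((\<lambda>\<sigma>. measure (noise_measure w \<sigma>) {e. \<forall>i. \<bar>e i\<bar> < \<delta>}) \<longlongrightarrow> 1) (at_right 0)"
proof -
  let ?f = "\<lambda>i \<sigma>. measure (density lborel (normal_density 0 (sqrt (\<sigma> * w i)))) {x. \<bar>x\<bar> < \<delta>}"
  have ev: "eventually (\<lambda>\<sigma>::real. \<sigma> > 0) (at_right 0)" by (simp add: eventually_at_right_less)
  have fi: "(?f i \<longlongrightarrow> 1) (at_right 0)" for i
  proof (rule tendsto_sandwich[where f="\<lambda>\<sigma>. 1 - \<sigma> * w i / \<delta>^2" and h="\<lambda>_. 1"])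
    show "eventually (\<lambda>\<sigma>. 1 - \<sigma> * w i / \<delta>^2 \<le> ?f i \<sigma>) (at_right 0)"
      using ev by eventually_elim (use factor_bounds(1) w d in auto)
    show "eventually (\<lambda>\<sigma>. ?f i \<sigma> \<le> 1) (at_right 0)"
      using ev by eventually_elim (use factor_bounds(2) w d in auto)
    have "((\<lambda>\<sigma>::real. 1 - \<sigma> * w i / \<delta>^2) \<longlongrightarrow> 1 - 0 * w i / \<delta>^2) (at_right 0)"
      using d by (intro tendsto_intros) auto
    then show "((\<lambda>\<sigma>::real. 1 - \<sigma> * w i / \<delta>^2) \<longlongrightarrow> 1) (at_right 0)" using d by simp
  qed simp
  have "((\<lambda>\<sigma>. \<Prod>i\<in>UNIV. ?f i \<sigma>) \<longlongrightarrow> (\<Prod>i\<in>(UNIV::'m set). 1)) (at_right 0)"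
    by (rule tendsto_prod) (use fi in auto)
  then have "((\<lambda>\<sigma>. \<Prod>i\<in>UNIV. ?f i \<sigma>) \<longlongrightarrow> 1) (at_right 0)" by simp
  then show ?thesis
    by (rule Lim_transform_eventually) (use ev in \<open>eventually_elim, simp add: box_measure[OF w]\<close>)
qed




lemma space_noise: "space (noise_measure w \<sigma>) = UNIV"
  by (simp add: noise_measure_def space_PiM)

lemma comp_meas[measurable]: "(\<lambda>e. e i) \<in> borel_measurable (noise_measure w \<sigma>)"
proof -
  have "(\<lambda>e. e i) \<in> measurable (noise_measure w \<sigma>) (density lborel (normal_density 0 (sqrt (\<sigma> * w i))))"
    unfolding noise_measure_def by (rule measurable_component_singleton) simp
  then show ?thesis by (simp add: measurable_def space_noise)
qed
lemma resid_meas: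
  "(\<lambda>e. resid H s R (\<lambda>i. H i \<bullet> x + e i + \<eta> * a i) j) \<in> borel_measurable (noise_measure w \<sigma>)"
  unfolding resid_lin by measurable
lemma Jstat_meas:
  "(\<lambda>e. Jstat H s R (\<lambda>i. H i \<bullet> x + e i + \<eta> * a i)) \<in> borel_measurable (noise_measure w \<sigma>)"
  unfolding Jstat_def resid_lin by measurable

lemma nresid_meas:
  "(\<lambda>e. nresid H s R (\<lambda>i. H i \<bullet> x + e i + \<eta> * a i) j) \<in> borel_measurable (noise_measure w \<sigma>)"
  unfolding nresid_def resid_lin by measurable

lemma run_all_iff:
  "(\<forall>N Rf. ise_run H s gd z k R N Rf \<longrightarrow> P Rf) \<longleftrightarrow>
   ((gd k (Jstat H s R z) \<longrightarrow> P R) \<and>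
    (\<not> gd k (Jstat H s R z) \<longrightarrow> (\<forall>i\<in>R. (\<forall>j\<in>R. \<bar>nresid H s R z j\<bar> \<le> \<bar>nresid H s R z i\<bar>)
        \<longrightarrow> (\<forall>N Rf. ise_run H s gd z (Suc k) (R - {i}) N Rf \<longrightarrow> P Rf))))"
  apply (rule iffI)
   apply (intro conjI impI)
    apply (blast intro: ise_run.stop)
   apply (blast intro: ise_run.remove)
  apply (intro allI impI)
  apply (erule ise_run.cases)
   apply blast
  apply blast
  done

lemma pred_step:
  fixes J :: "'a \<Rightarrow> real" and nr :: "'b \<Rightarrow> 'a \<Rightarrow> real"
  assumes J: "J \<in> borel_measurable M" and nr: "\<And>j. nr j \<in> borel_measurable M"
    and R: "finite R" and S: "\<And>i. i \<in> R \<Longrightarrow> S i \<in> sets M" and sp: "space M = UNIV"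
  shows "{e. (J e \<le> c \<longrightarrow> P) \<and> (\<not> J e \<le> c \<longrightarrow> (\<forall>i\<in>R. (\<forall>j\<in>R. \<bar>nr j e\<bar> \<le> \<bar>nr i e\<bar>) \<longrightarrow> e \<in> S i))} \<in> sets M"
proof -
  have S': "Measurable.pred M (\<lambda>e. e \<in> S i)" if "i \<in> R" for i
    using S[OF that] sp by (simp add: pred_def)
  note [measurable] = J nr S'
  have "Measurable.pred M (\<lambda>e. (J e \<le> c \<longrightarrow> P) \<and> (\<not> J e \<le> c \<longrightarrow> (\<forall>i\<in>R. (\<forall>j\<in>R. \<bar>nr j e\<bar> \<le> \<bar>nr i e\<bar>) \<longrightarrow> e \<in> S i)))"
    using R by measurable
  then show ?thesis using sp by (simp add: pred_def)
qed

lemma tgt_sets: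
  fixes H :: "'m::finite \<Rightarrow> real^'n::finite"
  shows "{e. \<forall>N Rf. ise_run H s (\<lambda>k v. v \<le> tau k) (\<lambda>i. H i \<bullet> x + e i + \<eta> * a i) k R N Rf \<longrightarrow> Rf \<subseteq> G}
     \<in> sets (noise_measure w \<sigma>)"
proof (induction "card R" arbitrary: R k rule: less_induct)
  case less
  let ?S = "\<lambda>k R. {e. \<forall>N Rf. ise_run H s (\<lambda>k v. v \<le> tau k) (\<lambda>i. H i \<bullet> x + e i + \<eta> * a i) k R N Rf \<longrightarrow> Rf \<subseteq> G}"
  have IH: "\<And>i. i \<in> R \<Longrightarrow> ?S (Suc k) (R - {i}) \<in> sets (noise_measure w \<sigma>)"
    using less.hyps card_Diff1_less[OF finite] by blast
  have eq: "?S k R = {e.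
     (Jstat H s R (\<lambda>i. H i \<bullet> x + e i + \<eta> * a i) \<le> tau k \<longrightarrow> R \<subseteq> G) \<and>
     (\<not> Jstat H s R (\<lambda>i. H i \<bullet> x + e i + \<eta> * a i) \<le> tau k \<longrightarrow>
        (\<forall>i\<in>R. (\<forall>j\<in>R. \<bar>nresid H s R (\<lambda>i. H i \<bullet> x + e i + \<eta> * a i) j\<bar> \<le> \<bar>nresid H s R (\<lambda>i. H i \<bullet> x + e i + \<eta> * a i) i\<bar>)
          \<longrightarrow> e \<in> ?S (Suc k) (R - {i})))}"
    apply (rule Collect_cong)
    apply (simp only: mem_Collect_eq)
    apply (rule run_all_iff)
    done
  show ?case unfolding eq
    by (rule pred_step[OF Jstat_meas nresid_meas _ IH space_noise]) simp_all
qed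



lemma gram_scale:
  assumes t: "t > 0"
  shows "gram H (\<lambda>i. t * s i) R = (1/t) *\<^sub>R gram H s R"
  unfolding gram_def scaleR_sum_right using t by (intro sum.cong) (auto simp: scaleR_scaleR)

lemma inv_scale:
  fixes G :: "real^'n::finite^'n"
  assumes t: "t > 0" and G: "invertible G"
  shows "matrix_inv ((1/t) *\<^sub>R G) = t *\<^sub>R matrix_inv G"
  by (rule matrix_inv_unique) (use t matrix_inv_props[OF G] in \<open>simp_all add: matrix_scalar_ac\<close>)

lemma est_scale:
  fixes H :: "'m::finite \<Rightarrow> real^'n::finite"
  assumes s: "\<forall>i. s i > 0" and f: "full_col_rank H R" and t: "t > 0"
  shows "est H (\<lambda>i. t * s i) R z = est H s R z"
proof -
  have "(\<Sum>i\<in>R. (z i / (t * s i)) *\<^sub>R H i) = (1/t) *\<^sub>R (\<Sum>i\<in>R. (z i / s i) *\<^sub>R H i)"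
    unfolding scaleR_sum_right by (intro sum.cong) (auto simp: scaleR_scaleR)
  then show ?thesis
    unfolding est_def gram_scale[OF t] inv_scale[OF t gram_invertible[OF s f]]
    using t by (simp add: matrix_vector_mult_scaleR scaleR_matrix_vector_assoc)
qed

lemma resid_scale:
  fixes H :: "'m::finite \<Rightarrow> real^'n::finite"
  assumes s: "\<forall>i. s i > 0" and f: "full_col_rank H R" and t: "t > 0"
  shows "resid H (\<lambda>i. t * s i) R z j = resid H s R z j"
  unfolding resid_def est_scale[OF s f t] ..

lemma Jstat_scale:
  fixes H :: "'m::finite \<Rightarrow> real^'n::finite"
  assumes s: "\<forall>i. s i > 0" and f: "full_col_rank H R" and t: "t > 0"
  shows "Jstat H (\<lambda>i. t * s i) R z = Jstat H s R z / t"
  unfolding Jstat_def resid_scale[OF s f t] sum_divide_distrib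
  by (intro sum.cong) auto

lemma WS_scale:
  fixes H :: "'m::finite \<Rightarrow> real^'n::finite"
  assumes s: "\<forall>i. s i > 0" and f: "full_col_rank H R" and t: "t > 0"
  shows "WSigma_diag H (\<lambda>i. t * s i) R j = t * WSigma_diag H s R j"
  unfolding WSigma_diag_def gram_scale[OF t] inv_scale[OF t gram_invertible[OF s f]]
  by (simp add: scaleR_matrix_vector_assoc[symmetric] right_diff_distrib)

lemma nresid_scale:
  fixes H :: "'m::finite \<Rightarrow> real^'n::finite"
  assumes s: "\<forall>i. s i > 0" and f: "full_col_rank H R" and t: "t > 0"
  shows "nresid H (\<lambda>i. t * s i) R z j = nresid H s R z j / sqrt t"
  unfolding nresid_def omega_def resid_scale[OF s f t] WS_scale[OF s f t]
  by (simp add: real_sqrt_mult)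

lemma resid_add:
  "resid H s R (\<lambda>i. u i + v i) j = resid H s R u j + resid H s R v j"
  unfolding resid_lin by (simp add: distrib_right sum.distrib)

lemma resid_smult:
  "resid H s R (\<lambda>i. c * u i) j = c * resid H s R u j"
  unfolding resid_lin by (simp add: sum_distrib_left right_diff_distrib mult.assoc)

lemma resid_ea:
  "resid H s R (\<lambda>i. e i + \<eta> * a i) j = resid H s R e j + \<eta> * resid H s R a j"
  using resid_add[of H s R e "\<lambda>i. \<eta> * a i" j] resid_smult[of H s R \<eta> a j] by simp

lemma nresid_ea:
  "nresid H s R (\<lambda>i. e i + \<eta> * a i) j = nresid H s R e j + \<eta> * nresid H s R a j"
  unfolding nresid_def resid_ea by (simp add: algebra_simps)

lemma resid_z:
  fixes H :: "'m::finite \<Rightarrow> real^'n::finite"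
  assumes s: "\<forall>i. s i > 0" and f: "full_col_rank H R"
  shows "resid H s R (\<lambda>i. H i \<bullet> x + e i + \<eta> * a i) j = resid H s R (\<lambda>i. e i + \<eta> * a i) j"
  using resid_add[of H s R "\<lambda>i. H i \<bullet> x" "\<lambda>i. e i + \<eta> * a i" j] resid_Hx[OF s f, of x j]
  by (simp add: add.assoc)

lemma Jstat_z:
  fixes H :: "'m::finite \<Rightarrow> real^'n::finite"
  assumes s: "\<forall>i. s i > 0" and f: "full_col_rank H R"
  shows "Jstat H s R (\<lambda>i. H i \<bullet> x + e i + \<eta> * a i) = Jstat H s R (\<lambda>i. e i + \<eta> * a i)"
  unfolding Jstat_def resid_z[OF s f] ..

lemma nresid_z:
  fixes H :: "'m::finite \<Rightarrow> real^'n::finite"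
  assumes s: "\<forall>i. s i > 0" and f: "full_col_rank H R"
  shows "nresid H s R (\<lambda>i. H i \<bullet> x + e i + \<eta> * a i) j = nresid H s R (\<lambda>i. e i + \<eta> * a i) j"
  unfolding nresid_def resid_z[OF s f] ..

lemma resid_bound:
  fixes H :: "'m::finite \<Rightarrow> real^'n::finite"
  assumes e: "\<forall>i. \<bar>e i\<bar> \<le> d"
  shows "\<bar>resid H s R e j\<bar> \<le> d * (1 + (\<Sum>i\<in>R. \<bar>H j \<bullet> ccoef H s R i\<bar>))"
proof -
  have "\<bar>resid H s R e j\<bar> \<le> \<bar>e j\<bar> + \<bar>\<Sum>i\<in>R. e i * (H j \<bullet> ccoef H s R i)\<bar>"
    unfolding resid_lin by (rule abs_triangle_ineq4)
  also have "\<dots> \<le> d + (\<Sum>i\<in>R. d * \<bar>H j \<bullet> ccoef H s R i\<bar>)"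
  proof (intro add_mono e[rule_format] order.trans[OF sum_abs] sum_mono)
    fix i show "\<bar>e i * (H j \<bullet> ccoef H s R i)\<bar> \<le> d * \<bar>H j \<bullet> ccoef H s R i\<bar>"
      unfolding abs_mult by (rule mult_right_mono) (use e in auto)
  qed
  finally show ?thesis by (simp add: sum_distrib_left algebra_simps)
qed

lemma run_subset: "ise_run H s gd z k R N Rf \<Longrightarrow> Rf \<subseteq> R"
  by (induction rule: ise_run.induct) auto

lemma nl_step:
  fixes H :: "'m::finite \<Rightarrow> real^'n::finite"
  assumes s: "\<forall>i. s i > 0" and f: "full_col_rank H R" and J: "Jstat H s R a \<noteq> 0"
    and i: "i \<in> R" and am: "\<forall>j\<in>R. \<bar>nresid H s R a j\<bar> \<le> \<bar>nresid H s R a i\<bar>"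
  shows "full_col_rank H (R - {i})"
proof (rule ccontr)
  assume "\<not> ?thesis"
  then have c: "critical_set H R {i}" using crit_iff[OF f i] by simp
  then have "nresid H s R a i = 0" unfolding nresid_def omega_def by simp
  then have z: "\<forall>j\<in>R. nresid H s R a j = 0" using am by fastforce
  obtain j where j: "j \<in> R" "resid H s R a j \<noteq> 0" using J Jstat_zero[OF s] by blast
  have nc: "\<not> critical_set H R {j}" using crit_resid[OF s f j(1)] j(2) by blast
  have "omega H s R j \<noteq> 0"
    unfolding omega_def using nc noncrit_WS[OF s f j(1) nc] by simp
  then have "nresid H s R a j \<noteq> 0" unfolding nresid_def using j(2) by simp
  then show False using z j(1) by blast
qed

lemma tri: "\<bar>b\<bar> - \<bar>a\<bar> \<le> \<bar>a + b::real\<bar>" by arith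

lemma perR:
  fixes H :: "'m::finite \<Rightarrow> real^'n::finite"
  assumes s: "\<forall>i. s i > 0" and f: "full_col_rank H R" and J: "Jstat H s R a \<noteq> 0" and eta: "\<eta> \<noteq> 0"
  shows "\<exists>d>0. \<forall>d'. 0 < d' \<longrightarrow> d' \<le> d \<longrightarrow> (\<forall>e. (\<forall>i. \<bar>e i\<bar> < d') \<longrightarrow>
      d' \<le> Jstat H s R (\<lambda>i. e i + \<eta> * a i) \<and>
      (\<forall>i\<in>R. (\<forall>j\<in>R. \<bar>nresid H s R (\<lambda>i. e i + \<eta> * a i) j\<bar> \<le> \<bar>nresid H s R (\<lambda>i. e i + \<eta> * a i) i\<bar>)
          \<longrightarrow> (\<forall>j\<in>R. \<bar>nresid H s R a j\<bar> \<le> \<bar>nresid H s R a i\<bar>)))"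
proof -
  define Kr where "Kr j = 1 + (\<Sum>i\<in>R. \<bar>H j \<bullet> ccoef H s R i\<bar>)" for j
  define K where "K = (\<Sum>j\<in>R. (\<bar>omega H s R j\<bar> + 1) * Kr j)"
  define na where "na j = nresid H s R a j" for j
  obtain j0 where j0: "j0 \<in> R" "resid H s R a j0 \<noteq> 0" using J Jstat_zero[OF s] by blast
  have Kr1: "Kr j \<ge> 1" for j unfolding Kr_def by (simp add: sum_nonneg)
  have nn: "0 \<le> (\<bar>omega H s R j\<bar> + 1) * Kr j" for j
    by (intro mult_nonneg_nonneg) (use Kr1[of j] in auto)
  have KrK: "(\<bar>omega H s R j\<bar> + 1) * Kr j \<le> K" if "j \<in> R" for j
    unfolding K_def
    by (rule member_le_sum[OF that]) (use nn in auto)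
  have Kr_le: "Kr j \<le> K" if "j \<in> R" for j
  proof -
    have "Kr j \<le> (\<bar>omega H s R j\<bar> + 1) * Kr j" using Kr1[of j]
      by (metis abs_ge_zero le_add_same_cancel2 mult_le_cancel_right1 order.trans zero_le_one not_le)
    then show ?thesis using KrK[OF that] by linarith
  qed
  have om_le: "\<bar>omega H s R j\<bar> * Kr j \<le> K" if "j \<in> R" for j
    using KrK[OF that] Kr1[of j] by (simp add: distrib_right)
  have Kpos: "K > 0" using Kr_le[OF j0(1)] Kr1[of j0] by linarith
  define c1 where "c1 = \<bar>\<eta> * resid H s R a j0\<bar>"
  have c1: "c1 > 0" unfolding c1_def using eta j0(2) by simp
  define c2 where "c2 = (c1/2)^2 / s j0"
  have c2: "c2 > 0" unfolding c2_def using c1 s by simp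
  define D where "D = (\<lambda>(i,j). \<bar>na i\<bar> - \<bar>na j\<bar>) ` {(i,j). i \<in> R \<and> j \<in> R \<and> \<bar>na j\<bar> < \<bar>na i\<bar>}"
  have finD: "finite D" unfolding D_def by simp
  define gp where "gp = Min (insert 1 D)"
  have gp: "gp > 0" unfolding gp_def using finD by (auto simp: D_def)
  have gp_le: "gp \<le> \<bar>na i\<bar> - \<bar>na j\<bar>" if "i \<in> R" "j \<in> R" "\<bar>na j\<bar> < \<bar>na i\<bar>" for i j
    unfolding gp_def using finD that by (intro Min_le) (auto simp: D_def)
  define d where "d = min (c1 / (2*K)) (min c2 (\<bar>\<eta>\<bar> * gp / (4*K)))"
  have d: "d > 0" unfolding d_def using c1 c2 gp Kpos eta by simp
  show ?thesis
  proof (intro exI[of _ d] conjI allI impI d ballI)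
    fix d' and e :: "'m \<Rightarrow> real"
    assume d'0: "0 < d'" and d'd: "d' \<le> d" and e: "\<forall>i. \<bar>e i\<bar> < d'"
    have ebd: "\<forall>i. \<bar>e i\<bar> \<le> d'" using e less_imp_le by blast
    have rb: "\<bar>resid H s R e j\<bar> \<le> d' * K" if "j \<in> R" for j
      using resid_bound[OF ebd, of H s R j] Kr_le[OF that] d'0 unfolding Kr_def[symmetric]
      by (meson mult_left_mono less_imp_le order.trans)
    have nb: "\<bar>nresid H s R e j\<bar> \<le> d' * K" if "j \<in> R" for j
    proof -
      have "\<bar>nresid H s R e j\<bar> = \<bar>omega H s R j\<bar> * \<bar>resid H s R e j\<bar>"
        unfolding nresid_def abs_mult ..
      also have "\<dots> \<le> \<bar>omega H s R j\<bar> * (d' * Kr j)"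
        using resid_bound[OF ebd, of H s R j] unfolding Kr_def[symmetric]
        by (rule mult_left_mono) simp
      also have "\<dots> = d' * (\<bar>omega H s R j\<bar> * Kr j)" by simp
      also have "\<dots> \<le> d' * K" using om_le[OF that] d'0 by (simp add: mult_left_mono)
      finally show ?thesis .
    qed
    have d'K1: "d' * K \<le> c1 / 2"
    proof -
      have "d' \<le> c1 / (2*K)" using d'd unfolding d_def by simp
      then have "d' * (2*K) \<le> c1" using Kpos by (simp add: pos_le_divide_eq)
      then show ?thesis by simp
    qed
    have d'K2: "4 * (d' * K) \<le> \<bar>\<eta>\<bar> * gp"
    proof -
      have "d' \<le> \<bar>\<eta>\<bar> * gp / (4*K)" using d'd unfolding d_def by simp
      then have "d' * (4*K) \<le> \<bar>\<eta>\<bar> * gp" using Kpos by (simp add: pos_le_divide_eq)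
      then show ?thesis by (simp add: algebra_simps)
    qed
    have d'K0: "d' * K > 0" using d'0 Kpos by simp
    show "d' \<le> Jstat H s R (\<lambda>i. e i + \<eta> * a i)"
    proof -
      let ?r = "resid H s R (\<lambda>i. e i + \<eta> * a i)"
      have "\<bar>?r j0\<bar> \<ge> c1 / 2"
        using rb[OF j0(1)] d'K1 tri[of "resid H s R e j0" "\<eta> * resid H s R a j0"]
        unfolding resid_ea c1_def by linarith
      then have "(c1/2)^2 \<le> (?r j0)^2"
        using c1 by (metis abs_le_square_iff abs_of_pos half_gt_zero order.trans abs_ge_zero power2_abs)
      then have "c2 \<le> (?r j0)^2 / s j0" unfolding c2_def using s by (simp add: divide_right_mono less_imp_le)
      also have "\<dots> \<le> Jstat H s R (\<lambda>i. e i + \<eta> * a i)"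
        unfolding Jstat_def
        by (rule member_le_sum[OF j0(1)]) (use s in \<open>auto intro: divide_nonneg_pos\<close>)
      finally show ?thesis using d'd unfolding d_def by linarith
    qed
    show "\<bar>nresid H s R a j\<bar> \<le> \<bar>nresid H s R a i\<bar>"
      if i: "i \<in> R"
      and am: "\<forall>j\<in>R. \<bar>nresid H s R (\<lambda>i. e i + \<eta> * a i) j\<bar> \<le> \<bar>nresid H s R (\<lambda>i. e i + \<eta> * a i) i\<bar>"
      and j: "j \<in> R" for i j
    proof (rule ccontr)
      assume nlt: "\<not> \<bar>nresid H s R a j\<bar> \<le> \<bar>nresid H s R a i\<bar>"
      then have lt: "\<bar>na i\<bar> < \<bar>na j\<bar>" unfolding na_def by simp
      have g: "gp \<le> \<bar>na j\<bar> - \<bar>na i\<bar>" by (rule gp_le[OF j i lt])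
      have "\<bar>\<eta>\<bar> * gp \<le> \<bar>\<eta>\<bar> * \<bar>na j\<bar> - \<bar>\<eta>\<bar> * \<bar>na i\<bar>"
        using mult_left_mono[OF g, of "\<bar>\<eta>\<bar>"] by (simp add: right_diff_distrib)
      moreover have "\<bar>nresid H s R (\<lambda>i. e i + \<eta> * a i) j\<bar> \<ge> \<bar>\<eta>\<bar> * \<bar>na j\<bar> - d' * K"
        using nb[OF j] tri[of "nresid H s R e j" "\<eta> * nresid H s R a j"]
        unfolding nresid_ea na_def abs_mult by linarith
      moreover have "\<bar>nresid H s R (\<lambda>i. e i + \<eta> * a i) i\<bar> \<le> \<bar>\<eta>\<bar> * \<bar>na i\<bar> + d' * K"
        using nb[OF i] abs_triangle_ineq[of "nresid H s R e i" "\<eta> * nresid H s R a i"]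
        unfolding nresid_ea na_def abs_mult by linarith
      ultimately show False using am j d'K2 d'K0 by fastforce
    qed
  qed
qed

lemma finite_min_ex:
  fixes F :: "'a set"
  assumes "finite F" "\<forall>R\<in>F. \<exists>d>0. \<forall>d'. 0 < d' \<longrightarrow> d' \<le> d \<longrightarrow> P R d'"
  shows "\<exists>d>0::real. \<forall>R\<in>F. P R d"
proof -
  have "\<exists>d>0::real. \<forall>R\<in>F. \<forall>d'. 0 < d' \<longrightarrow> d' \<le> d \<longrightarrow> P R d'"
    using assms
  proof (induction F rule: finite_induct)
    case empty then show ?case by (intro exI[of _ 1]) auto
  next
    case (insert R F)
    then obtain d1 where d1: "d1 > 0" "\<forall>R\<in>F. \<forall>d'. 0 < d' \<longrightarrow> d' \<le> d1 \<longrightarrow> P R d'" by auto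
    obtain d2 where d2: "d2 > 0" "\<forall>d'. 0 < d' \<longrightarrow> d' \<le> d2 \<longrightarrow> P R d'" using insert.prems by auto
    show ?case using d1 d2 by (intro exI[of _ "min d1 d2"]) auto
  qed
  then obtain d where "d > 0" "\<forall>R\<in>F. \<forall>d'. 0 < d' \<longrightarrow> d' \<le> d \<longrightarrow> P R d'" by auto
  then show ?thesis by (intro exI[of _ d]) auto
qed

lemma det_main:
  fixes H :: "'m::finite \<Rightarrow> real^'n::finite"
  assumes w: "\<forall>i. w i > 0" and tau: "\<forall>k. tau k > 0" and obs: "full_col_rank H UNIV"
    and Y: "\<forall>N Rf. ise_run H w (\<lambda>k v. v = 0) a 1 UNIV N Rf \<longrightarrow> est H w Rf a = y"
    and eta: "\<eta> \<noteq> 0"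
  shows "\<exists>d>0. \<exists>t0>0. \<forall>\<sigma>. 0 < \<sigma> \<longrightarrow> \<sigma> < t0 \<longrightarrow> (\<forall>e. (\<forall>i. \<bar>e i\<bar> < d) \<longrightarrow>
     (\<forall>N Rf. ise_run H (\<lambda>i. \<sigma> * w i) (\<lambda>k v. v \<le> tau k) (\<lambda>i. H i \<bullet> x + e i + \<eta> * a i) 1 UNIV N Rf
        \<longrightarrow> Rf \<subseteq> {i. \<eta> * a i = \<eta> * (H i \<bullet> y)}))"
proof -
  let ?F = "{R. full_col_rank H R \<and> Jstat H w R a \<noteq> 0}"
  let ?P = "\<lambda>R d'. \<forall>e. (\<forall>i. \<bar>e i\<bar> < d') \<longrightarrow>
      d' \<le> Jstat H w R (\<lambda>i. e i + \<eta> * a i) \<and>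
      (\<forall>i\<in>R. (\<forall>j\<in>R. \<bar>nresid H w R (\<lambda>i. e i + \<eta> * a i) j\<bar> \<le> \<bar>nresid H w R (\<lambda>i. e i + \<eta> * a i) i\<bar>)
          \<longrightarrow> (\<forall>j\<in>R. \<bar>nresid H w R a j\<bar> \<le> \<bar>nresid H w R a i\<bar>))"
  have "\<exists>d>0::real. \<forall>R\<in>?F. ?P R d"
    by (rule finite_min_ex) (use perR[OF w _ _ eta] in auto)
  then obtain d where dd: "d > 0 \<and> (\<forall>R\<in>?F. ?P R d)" ..
  have d: "d > 0" using dd by (rule conjunct1)
  have dR: "?P R d" if "R \<in> ?F" for R using bspec[OF conjunct2[OF dd] that] .
  define T where "T = (\<Sum>k\<le>CARD('m)+1. tau k)"
  have tauT: "tau k \<le> T" if "k \<le> CARD('m)+1" for k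
    unfolding T_def by (rule member_le_sum) (use that tau in \<open>auto intro: less_imp_le\<close>)
  have T0: "T \<ge> 0" using tauT[of 0] tau by (metis le0 less_imp_le order.trans)
  define t0 where "t0 = d / (T+1)"
  have t0: "t0 > 0" unfolding t0_def using d T0 by simp
  define Good where "Good = {i. \<eta> * a i = \<eta> * (H i \<bullet> y)}"
  have main: "Rf \<subseteq> Good" if s0: "0 < \<sigma>" and st: "\<sigma> < t0" and e: "\<forall>i. \<bar>e i\<bar> < d"
    and run0: "ise_run H (\<lambda>i. \<sigma> * w i) (\<lambda>k v. v \<le> tau k) (\<lambda>i. H i \<bullet> x + e i + \<eta> * a i) 1 UNIV N Rf"
    for \<sigma> :: real and e :: "'m \<Rightarrow> real" and N Rf
  proof -
    have sT: "\<sigma> * T < d"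
    proof -
      have "\<sigma> * (T+1) < d" using st T0 unfolding t0_def by (simp add: pos_less_divide_eq)
      then show ?thesis using s0 by (simp add: distrib_left)
    qed
    let ?z = "\<lambda>i. H i \<bullet> x + e i + \<eta> * a i"
    let ?ss = "\<lambda>i. \<sigma> * w i"
    let ?nl = "ise_run H w (\<lambda>k v. v = 0) a"
    have claim: "\<forall>k. full_col_rank H R \<longrightarrow> k + card R = CARD('m) + 1 \<longrightarrow>
       (\<forall>N Rf. ?nl k R N Rf \<longrightarrow> ?nl 1 UNIV N Rf) \<longrightarrow>
       (\<forall>N Rf. ise_run H ?ss (\<lambda>k v. v \<le> tau k) ?z k R N Rf \<longrightarrow> Rf \<subseteq> Good)" for R
    proof (induction "card R" arbitrary: R rule: less_induct)
      case less
      show ?case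
      proof (intro allI impI)
        fix k N Rf
        assume f: "full_col_rank H R" and kc: "k + card R = CARD('m) + 1"
          and link: "\<forall>N Rf. ?nl k R N Rf \<longrightarrow> ?nl 1 UNIV N Rf"
          and run: "ise_run H ?ss (\<lambda>k v. v \<le> tau k) ?z k R N Rf"
        show "Rf \<subseteq> Good"
        proof (cases "Jstat H w R a = 0")
          case True
          have "?nl k R k R" by (rule ise_run.stop) (use True in simp)
          then have "?nl 1 UNIV k R" by (rule link[rule_format])
          then have "est H w R a = y" by (rule Y[rule_format])
          moreover have "\<forall>j\<in>R. resid H w R a j = 0" using True Jstat_zero[OF w] by blast
          ultimately have "R \<subseteq> Good" unfolding Good_def resid_def by auto
          then show ?thesis using run_subset[OF run] by blast
        next
          case False
          then have RF: "R \<in> ?F" using f by blast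
          have PR: "?P R d" by (rule dR[OF RF])
          have ss: "\<forall>i. ?ss i > 0" using w s0 by simp
          from run show ?thesis
          proof (cases rule: ise_run.cases)
            case stop
            have "Jstat H ?ss R ?z = Jstat H w R (\<lambda>i. e i + \<eta> * a i) / \<sigma>"
              using Jstat_scale[OF w f s0, of ?z] Jstat_z[OF w f, of x e \<eta> a] by simp
            moreover have "d \<le> Jstat H w R (\<lambda>i. e i + \<eta> * a i)" using conjunct1[OF mp[OF spec[OF PR, of e] e]] .
            moreover have "tau k \<le> T" using kc by (intro tauT) linarith
            moreover have "Jstat H ?ss R ?z \<le> tau k" using stop by simp
            moreover have "d / \<sigma> \<le> Jstat H w R (\<lambda>i. e i + \<eta> * a i) / \<sigma>"
              using calculation(2) s0 by (simp add: divide_right_mono)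
            ultimately have "d / \<sigma> \<le> T" by linarith
            then have "d \<le> \<sigma> * T" using s0 by (simp add: pos_divide_le_eq mult.commute)
            then show ?thesis using sT by simp
          next
            case (remove i)
            have am: "\<forall>j\<in>R. \<bar>nresid H w R (\<lambda>i. e i + \<eta> * a i) j\<bar> \<le> \<bar>nresid H w R (\<lambda>i. e i + \<eta> * a i) i\<bar>"
            proof
              fix j assume j: "j \<in> R"
              have "\<bar>nresid H ?ss R ?z j\<bar> \<le> \<bar>nresid H ?ss R ?z i\<bar>" using bspec[OF remove(3) j] .
              then show "\<bar>nresid H w R (\<lambda>i. e i + \<eta> * a i) j\<bar> \<le> \<bar>nresid H w R (\<lambda>i. e i + \<eta> * a i) i\<bar>"
                unfolding nresid_scale[OF w f s0] nresid_z[OF w f] using s0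
                by (simp add: divide_le_cancel abs_divide)
            qed
            have amA: "\<forall>j\<in>R. \<bar>nresid H w R a j\<bar> \<le> \<bar>nresid H w R a i\<bar>"
              using mp[OF bspec[OF conjunct2[OF mp[OF spec[OF PR, of e] e]] remove(2)] am] .
            have f': "full_col_rank H (R - {i})" by (rule nl_step[OF w f False remove(2) amA])
            have finR: "finite R" by (rule finite)
            have cR: "card R > 0" using finR remove(2) by (metis card_0_eq empty_iff gr0I)
            have kc': "Suc k + card (R - {i}) = CARD('m) + 1"
              using kc cR remove(2) by (simp add: card_Diff_singleton)
            have link': "\<forall>N Rf. ?nl (Suc k) (R - {i}) N Rf \<longrightarrow> ?nl 1 UNIV N Rf"
            proof (intro allI impI)
              fix N' Rf' assume r': "?nl (Suc k) (R - {i}) N' Rf'"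
              have "?nl k R N' Rf'"
                by (rule ise_run.remove[where good="\<lambda>k v. v = 0", OF _ remove(2) amA r']) (use False in simp)
              then show "?nl 1 UNIV N' Rf'" by (rule link[rule_format])
            qed
            have lt: "card (R - {i}) < card R" by (rule card_Diff1_less[OF finR remove(2)])
            have IH: "\<forall>k. full_col_rank H (R - {i}) \<longrightarrow> k + card (R - {i}) = CARD('m) + 1 \<longrightarrow>
               (\<forall>N Rf. ?nl k (R - {i}) N Rf \<longrightarrow> ?nl 1 UNIV N Rf) \<longrightarrow>
               (\<forall>N Rf. ise_run H ?ss (\<lambda>k v. v \<le> tau k) ?z k (R - {i}) N Rf \<longrightarrow> Rf \<subseteq> Good)"
              by (rule less(1)[OF lt])
            show ?thesis using IH[rule_format, OF f' kc' link'[rule_format] remove(4)] .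
          qed
        qed
      qed
    qed
    show "Rf \<subseteq> Good"
      using claim[of UNIV] obs run0 by simp
  qed
  show ?thesis
    apply (rule exI[of _ d])
    apply (rule conjI[OF d])
    apply (rule exI[of _ t0])
    apply (rule conjI[OF t0])
    apply (intro allI impI)
    apply (rule main[unfolded Good_def])
       apply assumption+
    done
qed




lemma main_lim:
  fixes H :: "'m::finite \<Rightarrow> real^'n::finite"
  assumes w: "\<forall>i. w i > 0" and tau: "\<forall>k. tau k > 0" and obs: "full_col_rank H UNIV"
    and Y: "\<forall>N Rf. noiseless_run H w a N Rf \<longrightarrow> est H w Rf a = y"
  shows "((\<lambda>\<sigma>. measure (noise_measure w \<sigma>)
         {e. \<forall>N Rf. noisy_run H w \<sigma> tau (\<lambda>i. H i \<bullet> x + e i + \<eta> * a i) N Rf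
               \<longrightarrow> (\<forall>i\<in>Rf. H i \<bullet> x + e i + \<eta> * a i = H i \<bullet> (x + \<eta> *\<^sub>R y) + e i)})
       \<longlongrightarrow> 1) (at_right 0)"
proof -
  define Good where "Good = {i. \<eta> * a i = \<eta> * (H i \<bullet> y)}"
  define Tg where "Tg \<sigma> = {e. \<forall>N Rf. ise_run H (\<lambda>i. \<sigma> * w i) (\<lambda>k v. v \<le> tau k)
      (\<lambda>i. H i \<bullet> x + e i + \<eta> * a i) 1 UNIV N Rf \<longrightarrow> Rf \<subseteq> Good}" for \<sigma>
  have pw: "(\<forall>i\<in>Rf. H i \<bullet> x + e i + \<eta> * a i = H i \<bullet> (x + \<eta> *\<^sub>R y) + e i) \<longleftrightarrow> Rf \<subseteq> Good"
    for Rf :: "'m set" and e :: "'m \<Rightarrow> real"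
    unfolding Good_def by (auto simp: inner_add_right)
  have eqf: "(\<lambda>\<sigma>. measure (noise_measure w \<sigma>)
         {e. \<forall>N Rf. noisy_run H w \<sigma> tau (\<lambda>i. H i \<bullet> x + e i + \<eta> * a i) N Rf
               \<longrightarrow> (\<forall>i\<in>Rf. H i \<bullet> x + e i + \<eta> * a i = H i \<bullet> (x + \<eta> *\<^sub>R y) + e i)})
     = (\<lambda>\<sigma>. measure (noise_measure w \<sigma>) (Tg \<sigma>))"
    unfolding Tg_def noisy_run_def pw ..
  have meas: "Tg \<sigma> \<in> sets (noise_measure w \<sigma>)" for \<sigma> unfolding Tg_def by (rule tgt_sets)
  have ev0: "eventually (\<lambda>\<sigma>::real. \<sigma> > 0) (at_right 0)" by (simp add: eventually_at_right_less)
  have "((\<lambda>\<sigma>. measure (noise_measure w \<sigma>) (Tg \<sigma>)) \<longlongrightarrow> 1) (at_right 0)"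
  proof (cases "\<eta> = 0")
    case True
    then have "Tg \<sigma> = space (noise_measure w \<sigma>)" for \<sigma>
      unfolding Tg_def Good_def space_noise by auto
    then have "measure (noise_measure w \<sigma>) (Tg \<sigma>) = 1" if "\<sigma> > 0" for \<sigma>
      using prob_space.prob_space[OF noise_prob_space[OF w that]] by simp
    then show ?thesis
      by (intro Lim_transform_eventually[OF tendsto_const]) (use ev0 in \<open>eventually_elim, simp\<close>)
  next
    case False
    have Y': "\<forall>N Rf. ise_run H w (\<lambda>k v. v = 0) a 1 UNIV N Rf \<longrightarrow> est H w Rf a = y"
      using Y unfolding noiseless_run_def .
    obtain d t0 where d: "d > 0" and t0: "t0 > 0" and dt: "\<forall>\<sigma>. 0 < \<sigma> \<longrightarrow> \<sigma> < t0 \<longrightarrow> (\<forall>e. (\<forall>i. \<bar>e i\<bar> < d) \<longrightarrow>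
       (\<forall>N Rf. ise_run H (\<lambda>i. \<sigma> * w i) (\<lambda>k v. v \<le> tau k) (\<lambda>i. H i \<bullet> x + e i + \<eta> * a i) 1 UNIV N Rf
          \<longrightarrow> Rf \<subseteq> Good))"
      using det_main[OF w tau obs Y' False, of x] unfolding Good_def by blast
    have ev: "eventually (\<lambda>\<sigma>::real. 0 < \<sigma> \<and> \<sigma> < t0) (at_right 0)"
      unfolding eventually_at_right_field using t0 by blast
    show ?thesis
    proof (rule tendsto_sandwich[OF _ _ box_limit[OF w d] tendsto_const])
      show "eventually (\<lambda>\<sigma>. measure (noise_measure w \<sigma>) {e. \<forall>i. \<bar>e i\<bar> < d} \<le> measure (noise_measure w \<sigma>) (Tg \<sigma>)) (at_right 0)"
        using ev
      proof eventually_elim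
        case (elim \<sigma>)
        then have "{e. \<forall>i. \<bar>e i\<bar> < d} \<subseteq> Tg \<sigma>" unfolding Tg_def using dt by blast
        then show ?case
          using finite_measure.finite_measure_mono[OF prob_space.axioms(1)[OF noise_prob_space[OF w]] _ meas] elim
          by blast
      qed
      show "eventually (\<lambda>\<sigma>. measure (noise_measure w \<sigma>) (Tg \<sigma>) \<le> 1) (at_right 0)"
        using ev0 by eventually_elim (use prob_space.prob_le_1[OF noise_prob_space[OF w]] in blast)
    qed
  qed
  then show ?thesis unfolding eqf .
qed



theorem theorem2:
  fixes H :: "'m::finite \<Rightarrow> real^'n::finite"
    and w :: "'m \<Rightarrow> real"
    and tau :: "nat \<Rightarrow> real"
    and S1 S2 :: "'m set"
    and dx y :: "real^'n"
  assumes w_pos: "\<forall>i. w i > 0"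
    and w_sum: "(\<Sum>i\<in>UNIV. w i) = 1"
    and tau_pos: "\<forall>k. tau k > 0"
    and observable: "full_col_rank H UNIV"
    and crit: "critical_set H UNIV (S1 \<union> S2)"
    and partition: "S1 \<inter> S2 = {}" "S1 \<noteq> {}" "S2 \<noteq> {}"
    and dx_unit: "norm dx = 1"
    and dx_null: "{v. \<forall>i\<in>- (S1 \<union> S2). H i \<bullet> v = 0} = span {dx}"
    and y_unique: "\<exists>!y'. \<forall>N Rf. noiseless_run H w (\<lambda>i. zero_rows H S2 i \<bullet> dx) N Rf
                          \<longrightarrow> est H w Rf (\<lambda>i. zero_rows H S2 i \<bullet> dx) = y'"
    and y_def: "\<forall>N Rf. noiseless_run H w (\<lambda>i. zero_rows H S2 i \<bullet> dx) N Rf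
                          \<longrightarrow> est H w Rf (\<lambda>i. zero_rows H S2 i \<bullet> dx) = y"
  shows "\<forall>(x::real^'n) (eta::real).
     ((\<lambda>sigma2. measure (noise_measure w sigma2)
         {e. \<forall>N Rf. noisy_run H w sigma2 tau
                       (\<lambda>i. H i \<bullet> x + e i + eta * (zero_rows H S2 i \<bullet> dx)) N Rf
               \<longrightarrow> (\<forall>i\<in>Rf. H i \<bullet> x + e i + eta * (zero_rows H S2 i \<bullet> dx)
                              = H i \<bullet> (x + eta *\<^sub>R y) + e i)})
       \<longlongrightarrow> 1) (at_right 0)
   \<and> ((\<lambda>sigma2. measure (noise_measure w sigma2)
         {e. \<forall>N Rf. noisy_run H w sigma2 tau
                       (\<lambda>i. H i \<bullet> x + e i + eta * (zero_rows H S1 i \<bullet> dx)) N Rf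
               \<longrightarrow> (\<forall>i\<in>Rf. H i \<bullet> x + e i + eta * (zero_rows H S1 i \<bullet> dx)
                              = H i \<bullet> (x + eta *\<^sub>R (dx - y)) + e i)})
       \<longlongrightarrow> 1) (at_right 0)"
  proof -
  let ?a = "\<lambda>i. zero_rows H S2 i \<bullet> dx"
  have Y: "\<forall>N Rf. noiseless_run H w ?a N Rf \<longrightarrow> est H w Rf ?a = y" using y_def by simp
  have hz: "H i \<bullet> dx = 0" if "i \<notin> S1 \<union> S2" for i
  proof -
    have "dx \<in> span {dx}" by (simp add: span_base)
    then have "dx \<in> {v. \<forall>i\<in>- (S1 \<union> S2). H i \<bullet> v = 0}" using dx_null by simp
    then show ?thesis using that by simp
  qed
  have zr: "H i \<bullet> x + e i + \<eta> * (zero_rows H S1 i \<bullet> dx)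
      = H i \<bullet> (x + \<eta> *\<^sub>R dx) + e i + - \<eta> * (zero_rows H S2 i \<bullet> dx)"
    for i and x :: "real^'n" and \<eta> :: real and e :: "'m \<Rightarrow> real"
  proof -
    have "zero_rows H S1 i \<bullet> dx = H i \<bullet> dx - zero_rows H S2 i \<bullet> dx"
      unfolding zero_rows_def using partition(1) hz[of i] by auto
    then have "\<eta> * (zero_rows H S1 i \<bullet> dx) = \<eta> * (H i \<bullet> dx) - \<eta> * (zero_rows H S2 i \<bullet> dx)"
      by (simp add: right_diff_distrib)
    then show ?thesis by (simp add: inner_add_right)
  qed
  have vy: "x + \<eta> *\<^sub>R (dx - y) = (x + \<eta> *\<^sub>R dx) + (- \<eta>) *\<^sub>R y" for x :: "real^'n" and \<eta> :: real
    by (simp add: algebra_simps)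
  show ?thesis
  proof (intro allI conjI)
    fix x :: "real^'n" and \<eta> :: real
    show "((\<lambda>sigma2. measure (noise_measure w sigma2)
         {e. \<forall>N Rf. noisy_run H w sigma2 tau
                       (\<lambda>i. H i \<bullet> x + e i + \<eta> * (zero_rows H S2 i \<bullet> dx)) N Rf
               \<longrightarrow> (\<forall>i\<in>Rf. H i \<bullet> x + e i + \<eta> * (zero_rows H S2 i \<bullet> dx)
                              = H i \<bullet> (x + \<eta> *\<^sub>R y) + e i)})
       \<longlongrightarrow> 1) (at_right 0)"
      by (rule main_lim[OF w_pos tau_pos observable Y])
    show "((\<lambda>sigma2. measure (noise_measure w sigma2)
         {e. \<forall>N Rf. noisy_run H w sigma2 tau
                       (\<lambda>i. H i \<bullet> x + e i + \<eta> * (zero_rows H S1 i \<bullet> dx)) N Rf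
               \<longrightarrow> (\<forall>i\<in>Rf. H i \<bullet> x + e i + \<eta> * (zero_rows H S1 i \<bullet> dx)
                              = H i \<bullet> (x + \<eta> *\<^sub>R (dx - y)) + e i)})
       \<longlongrightarrow> 1) (at_right 0)"
      unfolding zr vy by (rule main_lim[OF w_pos tau_pos observable Y])
  qed
qed

end
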